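(* For any $\tilde x\in\widetilde{\mathcal{X}}_\ell$ and any $\tilde y\in\widetilde{\mathcal{Y}}_{\mathcal{M}}(\tilde x)$, the distribution $Q(\tilde y,\tilde x,\Xi(\tilde x))$ has the submodular dominance property: for every submodular function $f:\{0,1\}^n\to\mathbb{R}$, $$\mathbb{E}_{\hat y\sim Q(\tilde y,\tilde x,\Xi(\tilde x))}[f(\hat y)]\ \ge\ \mathbb{E}_{\hat y\sim\mathbf{Ind}(\tilde y)}[f(\hat y)].$$
   Context: $\mathcal{M}$ is a matroid on $[n]$ with matroid polytope $\mathcal{P}(\mathcal{M})$. $\mathcal{X}_\ell=\{x\in\{0,1\}^n:\sum_ix_i\le\ell\}$, $\widetilde{\mathcal{X}}_\ell=\{\tilde x\in[0,1]^n:\sum_i\tilde x_i\le\ell\}$, $\widetilde{\mathcal{Y}}_{\mathcal{M}}(\tilde x)=\{\tilde y\in[0,1]^n:\tilde y\in\mathcal{P}(\mathcal{M}),\tilde y\le\tilde x\}$. For $p\in[0,1]^n$, $\mathbf{Ind}(p)$ is the distribution of a random vector in $\{0,1\}^n$ with independent coordinates, coordinate $i$ equal to $1$ with probability $p_i$. $\Xi$ is randomized pipage rounding (Chekuri–Vondrák–Zenklusen 2009) from $\widetilde{\mathcal{X}}_\ell$ to $\mathcal{X}_\ell$: repeatedly pick two fractional coordinates $i,j$, set $\epsilon_1=\min(1-\tilde x_i,\tilde x_j)$, $\epsilon_2=\min(\tilde x_i,1-\tilde x_j)$, and with probability $\epsilon_2/(\epsilon_1+\epsilon_2)$ move to $(\tilde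 x_i+\epsilon_1,\tilde x_j-\epsilon_1)$, else to $(\tilde x_i-\epsilon_2,\tilde x_j+\epsilon_2)$, until integral (a lone fractional coordinate is handled as in that reference). The randomized map $Q(\tilde y,\tilde x,x)$: $a_i=\tilde y_i/\tilde x_i$ if $\tilde x_i\ne0$, else $0$; independent $c_i\sim\mathrm{Bernoulli}(a_i)$; output $\hat y$ with $\hat y_i=1$ iff $x_i=1$ and $c_i=1$. $Q(\tilde y,\tilde x,\Xi(\tilde x))$ is the distribution of $Q(\tilde y,\tilde x,x)$ with $x\sim\Xi(\tilde x)$ independent of the $c_i$. *)

theory Defs
  imports "HOL-Probability.Probability"
begin

text \<open>Ground set [n] is represented as {..<n} (i.e. 0..n-1). Vectors in R^n are
functions nat => real (only coordinates i < n matter); points of {0,1}^n are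
identified with subsets of {..<n}.\<close>

definition matroid :: "nat \<Rightarrow> nat set set \<Rightarrow> bool" where
  "matroid n I \<longleftrightarrow>
     (\<forall>A\<in>I. A \<subseteq> {..<n}) \<and> {} \<in> I \<and>
     (\<forall>A B. A \<in> I \<longrightarrow> B \<subseteq> A \<longrightarrow> B \<in> I) \<and>
     (\<forall>A B. A \<in> I \<longrightarrow> B \<in> I \<longrightarrow> card A < card B \<longrightarrow> (\<exists>e\<in>B - A. insert e A \<in> I))"

definition matroid_polytope :: "nat \<Rightarrow> nat set set \<Rightarrow> (nat \<Rightarrow> real) set" where
  "matroid_polytope n I = {y. \<exists>w::nat set \<Rightarrow> real.
      (\<forall>A\<in>I. 0 \<le> w A) \<and> (\<Sum>A\<in>I. w A) = 1 \<and>
      (\<forall>i<n. y i = (\<Sum>A\<in>I. w A * (if i \<in> A then 1 else 0)))}"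

definition X_tilde :: "nat \<Rightarrow> nat \<Rightarrow> (nat \<Rightarrow> real) set" where
  "X_tilde n l = {x. (\<forall>i<n. 0 \<le> x i \<and> x i \<le> 1) \<and> (\<Sum>i<n. x i) \<le> real l}"

definition Y_tilde :: "nat \<Rightarrow> nat set set \<Rightarrow> (nat \<Rightarrow> real) \<Rightarrow> (nat \<Rightarrow> real) set" where
  "Y_tilde n I x = {y. (\<forall>i<n. 0 \<le> y i \<and> y i \<le> 1) \<and> y \<in> matroid_polytope n I \<and>
                        (\<forall>i<n. y i \<le> x i)}"

definition submodular :: "nat \<Rightarrow> (nat set \<Rightarrow> real) \<Rightarrow> bool" where
  "submodular n f \<longleftrightarrow> (\<forall>A B. A \<subseteq> {..<n} \<longrightarrow> B \<subseteq> {..<n} \<longrightarrow>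
       f (A \<union> B) + f (A \<inter> B) \<le> f A + f B)"

definition Ind :: "nat \<Rightarrow> (nat \<Rightarrow> real) \<Rightarrow> nat set pmf" where
  "Ind n p = map_pmf (\<lambda>b. {i. b i}) (Pi_pmf {..<n} False (\<lambda>i. bernoulli_pmf (p i)))"

definition frac_coords :: "nat \<Rightarrow> (nat \<Rightarrow> real) \<Rightarrow> nat set" where
  "frac_coords n x = {i. i < n \<and> 0 < x i \<and> x i < 1}"

definition valid_selector :: "nat \<Rightarrow> ((nat \<Rightarrow> real) \<Rightarrow> nat \<times> nat) \<Rightarrow> bool" where
  "valid_selector n sel \<longleftrightarrow> (\<forall>x. 2 \<le> card (frac_coords n x) \<longrightarrow>
      fst (sel x) \<in> frac_coords n x \<and> snd (sel x) \<in> frac_coords n x \<and> fst (sel x) \<noteq> snd (sel x))"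

definition pipage_step :: "((nat \<Rightarrow> real) \<Rightarrow> nat \<times> nat) \<Rightarrow> nat \<Rightarrow> (nat \<Rightarrow> real) \<Rightarrow> (nat \<Rightarrow> real) pmf" where
  "pipage_step sel n x =
     (let F = frac_coords n x in
      if 2 \<le> card F then
        (let i = fst (sel x); j = snd (sel x);
             e1 = min (1 - x i) (x j); e2 = min (x i) (1 - x j) in
         map_pmf (\<lambda>b. if b then x(i := x i + e1, j := x j - e1)
                          else x(i := x i - e2, j := x j + e2))
                 (bernoulli_pmf (e2 / (e1 + e2))))
      else if card F = 1 then
        (let i = the_elem F in map_pmf (\<lambda>b. x(i := (if b then 1 else 0))) (bernoulli_pmf (x i)))
      else return_pmf x)"

fun pipage_iter :: "((nat \<Rightarrow> real) \<Rightarrow> nat \<times> nat) \<Rightarrow> nat \<Rightarrow> nat \<Rightarrow> (nat \<Rightarrow> real) \<Rightarrow> (nat \<Rightarrow> real) pmf" where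
  "pipage_iter sel n 0 x = return_pmf x"
| "pipage_iter sel n (Suc k) x = bind_pmf (pipage_step sel n x) (pipage_iter sel n k)"

text \<open>Xi: each step makes at least one more coordinate integral, so n steps suffice
to reach an integral vector; the output is the set of coordinates equal to 1.\<close>
definition pipage_rounding :: "((nat \<Rightarrow> real) \<Rightarrow> nat \<times> nat) \<Rightarrow> nat \<Rightarrow> (nat \<Rightarrow> real) \<Rightarrow> nat set pmf" where
  "pipage_rounding sel n x = map_pmf (\<lambda>z. {i. i < n \<and> z i = 1}) (pipage_iter sel n n x)"

definition Q_dist :: "nat \<Rightarrow> (nat \<Rightarrow> real) \<Rightarrow> (nat \<Rightarrow> real) \<Rightarrow> nat set pmf \<Rightarrow> nat set pmf" where
  "Q_dist n y x D =
     bind_pmf D (\<lambda>S. map_pmf (\<lambda>C. S \<inter> C)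
        (Ind n (\<lambda>i. if x i \<noteq> 0 then y i / x i else 0)))"

end

theory Submission imports Defs begin

lemma exp_bind_bounded:
  fixes h :: "'b \<Rightarrow> real"
  assumes "\<And>x. \<bar>h x\<bar> \<le> B"
  shows "measure_pmf.expectation (bind_pmf M N) h = measure_pmf.expectation M (\<lambda>x. measure_pmf.expectation (N x) h)"
  unfolding measure_pmf_bind
  apply (rule integral_bind[where K="count_space UNIV" and B=B and B'=1])
  using assms measurable_measure_pmf[of N]
  by (auto simp: measure_pmf.prob_space_axioms prob_space.finite_measure)

lemma integrable_bounded_pmf:
  fixes h :: "'b \<Rightarrow> real"
  assumes "\<And>x. \<bar>h x\<bar> \<le> B"
  shows "integrable (measure_pmf M) h"
  using assms by (intro measure_pmf.integrable_const_bound[where B=B]) auto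

lemma bernoulli_pmf_0: "bernoulli_pmf 0 = return_pmf False"
proof (intro pmf_eqI)
  fix b show "pmf (bernoulli_pmf 0) b = pmf (return_pmf False) b"
    by (cases b) (auto simp: pmf_return)
qed

lemma Ind_cong: "(\<And>i. i < n \<Longrightarrow> p i = q i) \<Longrightarrow> Ind n p = Ind n q"
  unfolding Ind_def by (intro arg_cong[where f="map_pmf _"] Pi_pmf_cong) auto

lemma set_Ind: "A \<in> set_pmf (Ind n p) \<Longrightarrow> A \<subseteq> {..<n}"
  unfolding Ind_def using set_Pi_pmf_subset[of "{..<n}" False "\<lambda>i. bernoulli_pmf (p i)"] by auto

lemma Ind_integral:
  assumes "\<And>k. k < n \<Longrightarrow> z k = 0 \<or> z k = 1"
  shows "Ind n (\<lambda>k. z k * a k) = map_pmf (\<lambda>C. {k. k < n \<and> z k = 1} \<inter> C) (Ind n a)"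
proof -
  let ?S = "{k. k < n \<and> z k = 1}"
  have "Pi_pmf {..<n} False (\<lambda>k. bernoulli_pmf (z k * a k)) =
        Pi_pmf {..<n} False (\<lambda>k. if k \<in> ?S then bernoulli_pmf (a k) else return_pmf False)"
  proof (intro Pi_pmf_cong refl)
    fix k assume "k \<in> {..<n}"
    then have "z k = 0 \<or> z k = 1" using assms by auto
    then show "bernoulli_pmf (z k * a k) = (if k \<in> ?S then bernoulli_pmf (a k) else return_pmf False)"
      using \<open>k \<in> {..<n}\<close> by (auto simp: bernoulli_pmf_0)
  qed
  also have "\<dots> = Pi_pmf ?S False (\<lambda>k. bernoulli_pmf (a k))"
    by (subst Pi_pmf_if_set) (auto intro!: Pi_pmf_cong)
  also have "\<dots> = map_pmf (\<lambda>f x. if x \<in> ?S then f x else False) (Pi_pmf {..<n} False (\<lambda>k. bernoulli_pmf (a k)))"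
    by (intro Pi_pmf_subset) auto
  finally have eq: "Pi_pmf {..<n} False (\<lambda>k. bernoulli_pmf (z k * a k)) = map_pmf (\<lambda>f x. if x \<in> ?S then f x else False) (Pi_pmf {..<n} False (\<lambda>k. bernoulli_pmf (a k)))" .
  show ?thesis unfolding Ind_def map_pmf_comp eq
    by (intro map_pmf_cong) auto
qed

lemma exp_pair_bounded:
  fixes h :: "'a \<times> 'b \<Rightarrow> real"
  assumes "\<And>x. \<bar>h x\<bar> \<le> B"
  shows "measure_pmf.expectation (pair_pmf M N) h = measure_pmf.expectation M (\<lambda>u. measure_pmf.expectation N (\<lambda>b. h (u, b)))"
  unfolding pair_pmf_def
  apply (subst exp_bind_bounded[where B=B], rule assms)
  apply (subst exp_bind_bounded[where B=B], rule assms)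
  apply simp
  done

lemma dec1:
  fixes g :: "('a \<Rightarrow> bool) \<Rightarrow> real"
  assumes "finite A" "i \<in> A" "P i = bernoulli_pmf s" "0 \<le> s" "s \<le> 1" "\<And>x. \<bar>g x\<bar> \<le> B"
  shows "measure_pmf.expectation (Pi_pmf A d P) g =
     s * measure_pmf.expectation (Pi_pmf (A - {i}) d P) (\<lambda>b. g (b(i := True))) +
     (1 - s) * measure_pmf.expectation (Pi_pmf (A - {i}) d P) (\<lambda>b. g (b(i := False)))"
proof -
  have A: "A = insert i (A - {i})" using assms by auto
  have "Pi_pmf A d P = map_pmf (\<lambda>(y,f). f(i:=y)) (pair_pmf (P i) (Pi_pmf (A - {i}) d P))"
    by (subst A, rule Pi_pmf_insert) (use assms in auto)
  then have "measure_pmf.expectation (Pi_pmf A d P) g =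
      measure_pmf.expectation (pair_pmf (P i) (Pi_pmf (A - {i}) d P)) (\<lambda>x. g (case x of (y,f) \<Rightarrow> f(i:=y)))"
    by simp
  also have "\<dots> = measure_pmf.expectation (P i) (\<lambda>u. measure_pmf.expectation (Pi_pmf (A - {i}) d P) (\<lambda>b. g (b(i:=u))))"
    by (subst exp_pair_bounded[where B=B]) (auto intro: assms(6) split: prod.splits)
  also have "\<dots> = s * measure_pmf.expectation (Pi_pmf (A - {i}) d P) (\<lambda>b. g (b(i := True))) +
     (1 - s) * measure_pmf.expectation (Pi_pmf (A - {i}) d P) (\<lambda>b. g (b(i := False)))"
    using assms by (simp add: algebra_simps)
  finally show ?thesis .
qed

definition mlext :: "nat \<Rightarrow> (nat set \<Rightarrow> real) \<Rightarrow> (nat \<Rightarrow> real) \<Rightarrow> real" where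
  "mlext n f p = measure_pmf.expectation (Ind n p) f"

definition E1 :: "nat \<Rightarrow> (nat set \<Rightarrow> real) \<Rightarrow> (nat \<Rightarrow> real) \<Rightarrow> nat \<Rightarrow> bool \<Rightarrow> real" where
  "E1 n f p i u = measure_pmf.expectation (Pi_pmf ({..<n} - {i}) False (\<lambda>k. bernoulli_pmf (p k)))
     (\<lambda>b. f {k. (b(i := u)) k})"

definition E2 :: "nat \<Rightarrow> (nat set \<Rightarrow> real) \<Rightarrow> (nat \<Rightarrow> real) \<Rightarrow> nat \<Rightarrow> nat \<Rightarrow> bool \<Rightarrow> bool \<Rightarrow> real" where
  "E2 n f p i j u v = measure_pmf.expectation (Pi_pmf ({..<n} - {i} - {j}) False (\<lambda>k. bernoulli_pmf (p k)))
     (\<lambda>b. f {k. ((b(j := v))(i := u)) k})"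

lemma mlext_dec1:
  assumes "i < n" "0 \<le> s" "s \<le> 1" "\<And>A. \<bar>f A\<bar> \<le> B"
  shows "mlext n f (p(i := s)) = s * E1 n f p i True + (1 - s) * E1 n f p i False"
proof -
  let ?Q = "\<lambda>k. bernoulli_pmf ((p(i := s)) k)"
  have eqP: "Pi_pmf ({..<n} - {i}) False ?Q = Pi_pmf ({..<n} - {i}) False (\<lambda>k. bernoulli_pmf (p k))"
    by (intro Pi_pmf_cong) auto
  have "mlext n f (p(i := s)) = measure_pmf.expectation (Pi_pmf {..<n} False ?Q) (\<lambda>b. f (Collect b))"
    unfolding mlext_def Ind_def by simp
  also have "\<dots> = s * measure_pmf.expectation (Pi_pmf ({..<n} - {i}) False ?Q) (\<lambda>b. f (Collect (b(i := True)))) +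
     (1 - s) * measure_pmf.expectation (Pi_pmf ({..<n} - {i}) False ?Q) (\<lambda>b. f (Collect (b(i := False))))"
    by (rule dec1[where B=B]) (use assms in auto)
  also have "\<dots> = s * E1 n f p i True + (1 - s) * E1 n f p i False"
    unfolding E1_def eqP ..
  finally show ?thesis .
qed

lemma mlext_dec2:
  assumes "i < n" "j < n" "i \<noteq> j" "0 \<le> s" "s \<le> 1" "0 \<le> t" "t \<le> 1" "\<And>A. \<bar>f A\<bar> \<le> B"
  shows "mlext n f (p(i := s, j := t)) = s * (t * E2 n f p i j True True + (1 - t) * E2 n f p i j True False)
      + (1 - s) * (t * E2 n f p i j False True + (1 - t) * E2 n f p i j False False)"
proof -
  let ?Q = "\<lambda>k. bernoulli_pmf ((p(i := s, j := t)) k)"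
  have eqP: "Pi_pmf ({..<n} - {i} - {j}) False ?Q = Pi_pmf ({..<n} - {i} - {j}) False (\<lambda>k. bernoulli_pmf (p k))"
    by (intro Pi_pmf_cong) auto
  have inner: "\<And>u. measure_pmf.expectation (Pi_pmf ({..<n} - {i}) False ?Q) (\<lambda>b. f (Collect (b(i := u)))) =
     t * E2 n f p i j u True + (1 - t) * E2 n f p i j u False"
  proof -
    fix u
    have "measure_pmf.expectation (Pi_pmf ({..<n} - {i}) False ?Q) (\<lambda>b. f (Collect (b(i := u)))) =
     t * measure_pmf.expectation (Pi_pmf ({..<n} - {i} - {j}) False ?Q) (\<lambda>b. f (Collect ((b(j := True))(i := u)))) +
     (1 - t) * measure_pmf.expectation (Pi_pmf ({..<n} - {i} - {j}) False ?Q) (\<lambda>b. f (Collect ((b(j := False))(i := u))))"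
      by (rule dec1[where B=B]) (use assms in auto)
    also have "\<dots> = t * E2 n f p i j u True + (1 - t) * E2 n f p i j u False"
      unfolding E2_def eqP ..
    finally show "?thesis u" .
  qed
  have "mlext n f (p(i := s, j := t)) = measure_pmf.expectation (Pi_pmf {..<n} False ?Q) (\<lambda>b. f (Collect b))"
    unfolding mlext_def Ind_def by simp
  also have "\<dots> = s * measure_pmf.expectation (Pi_pmf ({..<n} - {i}) False ?Q) (\<lambda>b. f (Collect (b(i := True)))) +
     (1 - s) * measure_pmf.expectation (Pi_pmf ({..<n} - {i}) False ?Q) (\<lambda>b. f (Collect (b(i := False))))"
    by (rule dec1[where B=B]) (use assms in auto)
  finally show ?thesis unfolding inner .
qed

lemma E2_submod:
  assumes "\<And>A. \<bar>f A\<bar> \<le> B" "\<And>A C. f (A \<union> C) + f (A \<inter> C) \<le> f A + f C" "i \<noteq> j"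
  shows "E2 n f p i j True True - E2 n f p i j True False - E2 n f p i j False True + E2 n f p i j False False \<le> 0"
proof -
  let ?M = "Pi_pmf ({..<n} - {i} - {j}) False (\<lambda>k. bernoulli_pmf (p k))"
  let ?g = "\<lambda>u v b. f {k. ((b(j := v))(i := u)) k}"
  have int: "\<And>u v. integrable (measure_pmf ?M) (?g u v)"
    by (rule integrable_bounded_pmf[where B=B]) (rule assms(1))
  have "E2 n f p i j True True - E2 n f p i j True False - E2 n f p i j False True + E2 n f p i j False False
     = measure_pmf.expectation ?M (\<lambda>b. ?g True True b - ?g True False b - ?g False True b + ?g False False b)"
    unfolding E2_def using int by (simp del: fun_upd_apply)
  also have "\<dots> \<le> measure_pmf.expectation ?M (\<lambda>b. 0)"
  proof (rule integral_mono)
    show "integrable (measure_pmf ?M) (\<lambda>b. ?g True True b - ?g True False b - ?g False True b + ?g False False b)"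
      using int by simp
    fix b
    have "{k. ((b(j := False))(i := True)) k} \<union> {k. ((b(j := True))(i := False)) k} = {k. ((b(j := True))(i := True)) k}"
      "{k. ((b(j := False))(i := True)) k} \<inter> {k. ((b(j := True))(i := False)) k} = {k. ((b(j := False))(i := False)) k}"
      using assms(3) by auto
    then show "?g True True b - ?g True False b - ?g False True b + ?g False False b \<le> 0"
      using assms(2)[of "{k. ((b(j := False))(i := True)) k}" "{k. ((b(j := True))(i := False)) k}"] by simp
  qed simp
  finally show ?thesis by simp
qed

lemma pipage_ineq:
  fixes e1 e2 ai aj zi zj E11 E10 E01 E00 :: real
  assumes "0 < e1" "0 < e2" "E11 - E10 - E01 + E00 \<le> 0" "0 \<le> ai" "0 \<le> aj"
  defines "H \<equiv> \<lambda>s t. s * (t * E11 + (1 - t) * E10) + (1 - s) * (t * E01 + (1 - t) * E00)"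
  shows "H (ai * zi) (aj * zj) \<le> e2 / (e1 + e2) * H (ai * (zi + e1)) (aj * (zj - e1))
            + (1 - e2 / (e1 + e2)) * H (ai * (zi - e2)) (aj * (zj + e2))"
proof -
  have "e2 / (e1 + e2) * H (ai * (zi + e1)) (aj * (zj - e1))
            + (1 - e2 / (e1 + e2)) * H (ai * (zi - e2)) (aj * (zj + e2)) - H (ai * zi) (aj * zj)
        = - (E11 - E10 - E01 + E00) * (ai * aj * e1 * e2)"
  proof -
    have poly: "e2 * H (ai * (zi + e1)) (aj * (zj - e1)) + e1 * H (ai * (zi - e2)) (aj * (zj + e2))
        - (e1 + e2) * H (ai * zi) (aj * zj) = - (E11 - E10 - E01 + E00) * (ai * aj * e1 * e2) * (e1 + e2)"
      unfolding H_def by algebra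
    have q: "1 - e2 / (e1 + e2) = e1 / (e1 + e2)" using assms(1,2) by (simp add: field_simps)
    have D: "e1 + e2 \<noteq> 0" using assms(1,2) by simp
    have "e2 / (e1 + e2) * H (ai * (zi + e1)) (aj * (zj - e1)) + e1 / (e1 + e2) * H (ai * (zi - e2)) (aj * (zj + e2))
        - H (ai * zi) (aj * zj) = (e2 * H (ai * (zi + e1)) (aj * (zj - e1)) + e1 * H (ai * (zi - e2)) (aj * (zj + e2))
        - (e1 + e2) * H (ai * zi) (aj * zj)) / (e1 + e2)"
      using D by (simp add: diff_divide_distrib add_divide_distrib)
    also have "\<dots> = - (E11 - E10 - E01 + E00) * (ai * aj * e1 * e2)"
      unfolding poly using D by simp
    finally show ?thesis unfolding q .
  qed
  moreover have "0 \<le> - (E11 - E10 - E01 + E00) * (ai * aj * e1 * e2)"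
    using assms by (intro mult_nonneg_nonneg) auto
  ultimately show ?thesis by linarith
qed

definition G :: "nat \<Rightarrow> (nat set \<Rightarrow> real) \<Rightarrow> (nat \<Rightarrow> real) \<Rightarrow> (nat \<Rightarrow> real) \<Rightarrow> real" where
  "G n f a z = mlext n f (\<lambda>k. z k * a k)"

lemma unit_mult: "0 \<le> (u::real) \<Longrightarrow> u \<le> 1 \<Longrightarrow> 0 \<le> v \<Longrightarrow> v \<le> 1 \<Longrightarrow> 0 \<le> u * v \<and> u * v \<le> 1"
  by (simp add: mult_le_one)

lemma step_two:
  assumes vs: "valid_selector n sel" and two: "2 \<le> card (frac_coords n z)"
    and ar: "\<And>k. k < n \<Longrightarrow> 0 \<le> a k \<and> a k \<le> 1"
    and fb: "\<And>A. \<bar>f A\<bar> \<le> B" and sm: "\<And>A C. f (A \<union> C) + f (A \<inter> C) \<le> f A + f C"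
  shows "G n f a z \<le> measure_pmf.expectation (pipage_step sel n z) (G n f a)"
proof -
  define i where "i = fst (sel z)"
  define j where "j = snd (sel z)"
  define e1 where "e1 = min (1 - z i) (z j)"
  define e2 where "e2 = min (z i) (1 - z j)"
  define q where "q = e2 / (e1 + e2)"
  have iF: "i \<in> frac_coords n z" and jF: "j \<in> frac_coords n z" and ij: "i \<noteq> j"
    using vs two unfolding valid_selector_def i_def j_def by auto
  then have iz: "i < n" "0 < z i" "z i < 1" and jz: "j < n" "0 < z j" "z j < 1"
    unfolding frac_coords_def by auto
  have e1p: "0 < e1" and e2p: "0 < e2" using iz jz unfolding e1_def e2_def by auto
  have q01: "0 \<le> q" "q \<le> 1" using e1p e2p unfolding q_def by (auto simp: field_simps)
  define z1 where "z1 = z(i := z i + e1, j := z j - e1)"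
  define z2 where "z2 = z(i := z i - e2, j := z j + e2)"
  have step: "pipage_step sel n z = map_pmf (\<lambda>b. if b then z1 else z2) (bernoulli_pmf q)"
    using two unfolding pipage_step_def Let_def i_def[symmetric] j_def[symmetric] e1_def[symmetric] e2_def[symmetric]
      q_def[symmetric] z1_def z2_def by simp
  have Estep: "measure_pmf.expectation (pipage_step sel n z) (G n f a) = q * G n f a z1 + (1 - q) * G n f a z2"
    unfolding step using q01 by simp
  define P where "P = (\<lambda>k. z k * a k)"
  have z1P: "(\<lambda>k. z1 k * a k) = P(i := a i * (z i + e1), j := a j * (z j - e1))"
    unfolding z1_def P_def using ij by (auto simp: fun_eq_iff)
  have z2P: "(\<lambda>k. z2 k * a k) = P(i := a i * (z i - e2), j := a j * (z j + e2))"
    unfolding z2_def P_def using ij by (auto simp: fun_eq_iff)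
  have zP: "(\<lambda>k. z k * a k) = P(i := a i * z i, j := a j * z j)"
    unfolding P_def by (auto simp: fun_eq_iff mult.commute)
  have r1: "0 \<le> z i + e1" "z i + e1 \<le> 1" "0 \<le> z j - e1" "z j - e1 \<le> 1"
    using iz jz e1p unfolding e1_def by auto
  have r2: "0 \<le> z i - e2" "z i - e2 \<le> 1" "0 \<le> z j + e2" "z j + e2 \<le> 1"
    using iz jz e2p unfolding e2_def by auto
  note ai = ar[OF iz(1)] and aj = ar[OF jz(1)]
  let ?E = "E2 n f P i j"
  let ?H = "\<lambda>s t. s * (t * ?E True True + (1 - t) * ?E True False) + (1 - s) * (t * ?E False True + (1 - t) * ?E False False)"
  have G1: "G n f a z1 = ?H (a i * (z i + e1)) (a j * (z j - e1))"
    unfolding G_def z1P using unit_mult[of "a i" "z i + e1"] unit_mult[of "a j" "z j - e1"] ai aj r1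
    by (intro mlext_dec2[where B=B] iz jz ij fb) auto
  have G2: "G n f a z2 = ?H (a i * (z i - e2)) (a j * (z j + e2))"
    unfolding G_def z2P using unit_mult[of "a i" "z i - e2"] unit_mult[of "a j" "z j + e2"] ai aj r2
    by (intro mlext_dec2[where B=B] iz jz ij fb) auto
  have G0: "G n f a z = ?H (a i * z i) (a j * z j)"
    unfolding G_def zP using unit_mult[of "a i" "z i"] unit_mult[of "a j" "z j"] ai aj iz jz
    by (intro mlext_dec2[where B=B] iz jz ij fb) auto
  have c: "?E True True - ?E True False - ?E False True + ?E False False \<le> 0"
    by (rule E2_submod[OF fb sm ij])
  show ?thesis unfolding Estep G0 G1 G2 q_def
    using pipage_ineq[OF e1p e2p c, of "a i" "a j" "z i" "z j"] ai aj by (simp add: mult.commute)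
qed

lemma finite_frac: "finite (frac_coords n z)"
  unfolding frac_coords_def by auto

lemma step_two_set:
  assumes vs: "valid_selector n sel" and two: "2 \<le> card (frac_coords n z)"
    and zr: "\<And>k. k < n \<Longrightarrow> 0 \<le> z k \<and> z k \<le> 1"
    and z': "z' \<in> set_pmf (pipage_step sel n z)"
  shows "(\<forall>k<n. 0 \<le> z' k \<and> z' k \<le> 1) \<and> card (frac_coords n z') < card (frac_coords n z)"
proof -
  define i where "i = fst (sel z)"
  define j where "j = snd (sel z)"
  define e1 where "e1 = min (1 - z i) (z j)"
  define e2 where "e2 = min (z i) (1 - z j)"
  define q where "q = e2 / (e1 + e2)"
  have iF: "i \<in> frac_coords n z" and jF: "j \<in> frac_coords n z" and ij: "i \<noteq> j"
    using vs two unfolding valid_selector_def i_def j_def by auto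
  then have iz: "i < n" "0 < z i" "z i < 1" and jz: "j < n" "0 < z j" "z j < 1"
    unfolding frac_coords_def by auto
  have e1p: "0 < e1" and e2p: "0 < e2" using iz jz unfolding e1_def e2_def by auto
  define z1 where "z1 = z(i := z i + e1, j := z j - e1)"
  define z2 where "z2 = z(i := z i - e2, j := z j + e2)"
  have step: "pipage_step sel n z = map_pmf (\<lambda>b. if b then z1 else z2) (bernoulli_pmf q)"
    using two unfolding pipage_step_def Let_def i_def[symmetric] j_def[symmetric] e1_def[symmetric] e2_def[symmetric]
      q_def[symmetric] z1_def z2_def by simp
  have zz: "z' = z1 \<or> z' = z2" using z' unfolding step by auto
  have r1: "0 \<le> z i + e1" "z i + e1 \<le> 1" "0 \<le> z j - e1" "z j - e1 \<le> 1"
    using iz jz e1p unfolding e1_def by auto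
  have r2: "0 \<le> z i - e2" "z i - e2 \<le> 1" "0 \<le> z j + e2" "z j + e2 \<le> 1"
    using iz jz e2p unfolding e2_def by auto
  have i1: "z1 i = 1 \<or> z1 j = 0" using ij unfolding z1_def e1_def by (auto simp: min_def)
  have i2: "z2 i = 0 \<or> z2 j = 1" using ij unfolding z2_def e2_def by (auto simp: min_def)
  have ran: "\<forall>k<n. 0 \<le> z' k \<and> z' k \<le> 1"
    using zz r1 r2 zr unfolding z1_def z2_def by auto
  have sub: "frac_coords n z' \<subseteq> frac_coords n z"
    using zz iF jF unfolding z1_def z2_def frac_coords_def by (auto split: if_splits)
  have "i \<notin> frac_coords n z' \<or> j \<notin> frac_coords n z'"
    using zz i1 i2 unfolding frac_coords_def by auto
  then have "frac_coords n z' \<subset> frac_coords n z" using sub iF jF by auto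
  then have "card (frac_coords n z') < card (frac_coords n z)"
    by (intro psubset_card_mono finite_frac)
  with ran show ?thesis by blast
qed

lemma step_one:
  assumes one: "card (frac_coords n z) = 1"
    and ar: "\<And>k. k < n \<Longrightarrow> 0 \<le> a k \<and> a k \<le> 1"
    and fb: "\<And>A. \<bar>f A\<bar> \<le> B"
  shows "G n f a z \<le> measure_pmf.expectation (pipage_step sel n z) (G n f a)"
proof -
  obtain i where F: "frac_coords n z = {i}" using one card_1_singletonE by blast
  then have iz: "i < n" "0 < z i" "z i < 1" unfolding frac_coords_def by auto
  have step: "pipage_step sel n z = map_pmf (\<lambda>b. z(i := (if b then 1 else 0))) (bernoulli_pmf (z i))"
    unfolding pipage_step_def Let_def F by simp
  define P where "P = (\<lambda>k. z k * a k)"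
  have Gu: "G n f a (z(i := u)) = u * a i * E1 n f P i True + (1 - u * a i) * E1 n f P i False"
    if "0 \<le> u" "u \<le> 1" for u
  proof -
    have "(\<lambda>k. (z(i := u)) k * a k) = P(i := u * a i)" unfolding P_def by (auto simp: fun_eq_iff)
    then show ?thesis unfolding G_def using unit_mult[of u "a i"] that ar[OF iz(1)]
      by (simp only:) (rule mlext_dec1[where B=B, OF iz(1) _ _ fb]; simp)
  qed
  have "G n f a z = G n f a (z(i := z i))" by simp
  also have "\<dots> = z i * a i * E1 n f P i True + (1 - z i * a i) * E1 n f P i False"
    using iz by (intro Gu) auto
  also have "\<dots> = z i * G n f a (z(i := 1)) + (1 - z i) * G n f a (z(i := 0))"
    unfolding Gu[of 0, simplified] Gu[of 1, simplified] by (simp add: algebra_simps)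
  also have "\<dots> = measure_pmf.expectation (pipage_step sel n z) (G n f a)"
    unfolding step using iz by simp
  finally show ?thesis by simp
qed

lemma step_mono:
  assumes vs: "valid_selector n sel"
    and ar: "\<And>k. k < n \<Longrightarrow> 0 \<le> a k \<and> a k \<le> 1"
    and fb: "\<And>A. \<bar>f A\<bar> \<le> B" and sm: "\<And>A C. f (A \<union> C) + f (A \<inter> C) \<le> f A + f C"
  shows "G n f a z \<le> measure_pmf.expectation (pipage_step sel n z) (G n f a)"
proof -
  consider "2 \<le> card (frac_coords n z)" | "card (frac_coords n z) = 1" | "card (frac_coords n z) = 0" by linarith
  then show ?thesis
  proof cases
    case 1 then show ?thesis by (rule step_two[OF vs _ ar fb sm])
  next
    case 2 then show ?thesis by (rule step_one[OF _ ar fb])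
  next
    case 3 then show ?thesis unfolding pipage_step_def Let_def by simp
  qed
qed

lemma step_set:
  assumes vs: "valid_selector n sel"
    and zr: "\<And>k. k < n \<Longrightarrow> 0 \<le> z k \<and> z k \<le> 1"
    and z': "z' \<in> set_pmf (pipage_step sel n z)"
  shows "(\<forall>k<n. 0 \<le> z' k \<and> z' k \<le> 1) \<and> (card (frac_coords n z') < card (frac_coords n z) \<or> card (frac_coords n z) = 0 \<and> z' = z)"
proof -
  consider "2 \<le> card (frac_coords n z)" | "card (frac_coords n z) = 1" | "card (frac_coords n z) = 0" by linarith
  then show ?thesis
  proof cases
    case 1 then show ?thesis using step_two_set[OF vs _ zr z'] by blast
  next
    case 2
    obtain i where F: "frac_coords n z = {i}" using 2 card_1_singletonE by blast
    then have iz: "i < n" "0 < z i" "z i < 1" unfolding frac_coords_def by auto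
    have step: "pipage_step sel n z = map_pmf (\<lambda>b. z(i := (if b then 1 else 0))) (bernoulli_pmf (z i))"
      unfolding pipage_step_def Let_def F by simp
    obtain b where zb: "z' = z(i := (if b then 1 else 0))" using z' unfolding step by auto
    have "frac_coords n z' = {}" using F unfolding zb frac_coords_def by auto
    then show ?thesis using 2 zr unfolding zb by auto
  next
    case 3 then show ?thesis using z' zr unfolding pipage_step_def Let_def by simp
  qed
qed

lemma exp_abs_bound:
  fixes h :: "'b \<Rightarrow> real"
  assumes "\<And>x. \<bar>h x\<bar> \<le> B"
  shows "\<bar>measure_pmf.expectation M h\<bar> \<le> B"
proof -
  have "\<bar>measure_pmf.expectation M h\<bar> \<le> measure_pmf.expectation M (\<lambda>x. norm (h x))"
    using integral_norm_bound[of M h] by simp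
  also have "\<dots> \<le> measure_pmf.expectation M (\<lambda>x. B)"
  proof -
    have B0: "0 \<le> B" using assms[of undefined] by linarith
    show ?thesis using assms B0 by (intro integral_mono integrable_bounded_pmf[where B=B]) auto
  qed
  also have "\<dots> = B" by simp
  finally show ?thesis .
qed

definition Phi :: "nat \<Rightarrow> (nat set \<Rightarrow> real) \<Rightarrow> (nat \<Rightarrow> real) \<Rightarrow> (nat \<Rightarrow> real) \<Rightarrow> real" where
  "Phi n f a z = measure_pmf.expectation (map_pmf (\<lambda>C. {k. k < n \<and> z k = 1} \<inter> C) (Ind n a)) f"

lemma iter_mono:
  assumes vs: "valid_selector n sel"
    and ar: "\<And>k. k < n \<Longrightarrow> 0 \<le> a k \<and> a k \<le> 1"
    and fb: "\<And>A. \<bar>f A\<bar> \<le> B" and sm: "\<And>A C. f (A \<union> C) + f (A \<inter> C) \<le> f A + f C"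
  shows "\<forall>z. (\<forall>k<n. 0 \<le> z k \<and> z k \<le> 1) \<longrightarrow> card (frac_coords n z) \<le> m \<longrightarrow>
           G n f a z \<le> measure_pmf.expectation (pipage_iter sel n m z) (Phi n f a)"
proof (induction m)
  case 0
  show ?case
  proof (intro allI impI)
    fix z assume zr: "\<forall>k<n. 0 \<le> z k \<and> z k \<le> 1" and c: "card (frac_coords n z) \<le> 0"
    then have "frac_coords n z = {}" using finite_frac by auto
    then have "\<And>k. k < n \<Longrightarrow> z k = 0 \<or> z k = 1" using zr unfolding frac_coords_def by force
    then have "Ind n (\<lambda>k. z k * a k) = map_pmf (\<lambda>C. {k. k < n \<and> z k = 1} \<inter> C) (Ind n a)"
      by (rule Ind_integral)
    then show "G n f a z \<le> measure_pmf.expectation (pipage_iter sel n 0 z) (Phi n f a)"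
      unfolding G_def mlext_def Phi_def by simp
  qed
next
  case (Suc m)
  show ?case
  proof (intro allI impI)
    fix z assume zr: "\<forall>k<n. 0 \<le> z k \<and> z k \<le> 1" and c: "card (frac_coords n z) \<le> Suc m"
    have Phib: "\<And>z. \<bar>Phi n f a z\<bar> \<le> B" unfolding Phi_def by (rule exp_abs_bound[OF fb])
    have Gb: "\<And>z. \<bar>G n f a z\<bar> \<le> B" unfolding G_def mlext_def by (rule exp_abs_bound[OF fb])
    have "G n f a z \<le> measure_pmf.expectation (pipage_step sel n z) (G n f a)"
      by (rule step_mono[OF vs ar fb sm])
    also have "\<dots> \<le> measure_pmf.expectation (pipage_step sel n z)
                   (\<lambda>z'. measure_pmf.expectation (pipage_iter sel n m z') (Phi n f a))"
    proof (rule integral_mono_AE)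
      show "integrable (measure_pmf (pipage_step sel n z)) (G n f a)"
        by (rule integrable_bounded_pmf[where B=B]) (rule Gb)
      show "integrable (measure_pmf (pipage_step sel n z)) (\<lambda>z'. measure_pmf.expectation (pipage_iter sel n m z') (Phi n f a))"
        by (rule integrable_bounded_pmf[where B=B]) (rule exp_abs_bound[OF Phib])
      show "AE z' in measure_pmf (pipage_step sel n z). G n f a z' \<le> measure_pmf.expectation (pipage_iter sel n m z') (Phi n f a)"
        unfolding AE_measure_pmf_iff
      proof
        fix z' assume z': "z' \<in> set_pmf (pipage_step sel n z)"
        have "(\<forall>k<n. 0 \<le> z' k \<and> z' k \<le> 1) \<and> (card (frac_coords n z') < card (frac_coords n z) \<or> card (frac_coords n z) = 0 \<and> z' = z)"
          using step_set[OF vs _ z'] zr by blast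
        then have "(\<forall>k<n. 0 \<le> z' k \<and> z' k \<le> 1) \<and> card (frac_coords n z') \<le> m"
          using c by auto
        then show "G n f a z' \<le> measure_pmf.expectation (pipage_iter sel n m z') (Phi n f a)"
          using Suc.IH by blast
      qed
    qed
    also have "\<dots> = measure_pmf.expectation (pipage_iter sel n (Suc m) z) (Phi n f a)"
      by (simp only: pipage_iter.simps, rule exp_bind_bounded[symmetric, OF Phib])
    finally show "G n f a z \<le> measure_pmf.expectation (pipage_iter sel n (Suc m) z) (Phi n f a)" .
  qed
qed

lemma exp_cong_pmf:
  fixes h g :: "'a \<Rightarrow> real"
  assumes "\<And>x. x \<in> set_pmf M \<Longrightarrow> h x = g x"
  shows "measure_pmf.expectation M h = measure_pmf.expectation M g"
  using assms by (intro integral_cong_AE) (auto simp: AE_measure_pmf_iff)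

theorem lemma14:
  fixes n l :: nat and I :: "nat set set" and sel :: "(nat \<Rightarrow> real) \<Rightarrow> nat \<times> nat"
    and x y :: "nat \<Rightarrow> real" and f :: "nat set \<Rightarrow> real"
  assumes "matroid n I"
    and "valid_selector n sel"
    and "x \<in> X_tilde n l"
    and "y \<in> Y_tilde n I x"
    and "submodular n f"
  shows "measure_pmf.expectation (Q_dist n y x (pipage_rounding sel n x)) f
           \<ge> measure_pmf.expectation (Ind n y) f"
proof -
  note vs = assms(2)
  have xr: "\<And>k. k < n \<Longrightarrow> 0 \<le> x k \<and> x k \<le> 1" using assms(3) unfolding X_tilde_def by auto
  have yr: "\<And>k. k < n \<Longrightarrow> 0 \<le> y k \<and> y k \<le> x k" using assms(4) unfolding Y_tilde_def by auto
  define a where "a = (\<lambda>i. if x i \<noteq> 0 then y i / x i else 0)"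
  have ar: "\<And>k. k < n \<Longrightarrow> 0 \<le> a k \<and> a k \<le> 1"
  proof -
    fix k assume k: "k < n"
    show "0 \<le> a k \<and> a k \<le> 1"
    proof (cases "x k = 0")
      case False
      then have "0 < x k" using xr[OF k] by auto
      then show ?thesis using yr[OF k] False unfolding a_def by (simp add: divide_le_eq_1)
    qed (simp add: a_def)
  qed
  have xa: "\<And>k. k < n \<Longrightarrow> x k * a k = y k"
    using xr yr unfolding a_def by (force simp: field_simps)
  define fb where "fb = (\<lambda>A. f (A \<inter> {..<n}))"
  define B where "B = Max ((\<lambda>A. \<bar>f A\<bar>) ` Pow {..<n})"
  have fbb: "\<And>A. \<bar>fb A\<bar> \<le> B"
    unfolding fb_def B_def by (intro Max_ge) auto
  have sm: "\<And>A C. fb (A \<union> C) + fb (A \<inter> C) \<le> fb A + fb C"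
  proof -
    fix A C
    have "(A \<union> C) \<inter> {..<n} = (A \<inter> {..<n}) \<union> (C \<inter> {..<n})"
         "(A \<inter> C) \<inter> {..<n} = (A \<inter> {..<n}) \<inter> (C \<inter> {..<n})" by auto
    then show "fb (A \<union> C) + fb (A \<inter> C) \<le> fb A + fb C"
      using assms(5) unfolding submodular_def fb_def by simp
  qed
  have e1: "measure_pmf.expectation (Ind n y) f = measure_pmf.expectation (Ind n y) fb"
  proof (rule exp_cong_pmf)
    fix A assume "A \<in> set_pmf (Ind n y)"
    then have "A \<inter> {..<n} = A" using set_Ind by blast
    then show "f A = fb A" unfolding fb_def by simp
  qed
  have supp: "set_pmf (Q_dist n y x (pipage_rounding sel n x)) \<subseteq> Pow {..<n}"
    unfolding Q_dist_def using set_Ind by fastforce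
  have e2: "measure_pmf.expectation (Q_dist n y x (pipage_rounding sel n x)) f =
            measure_pmf.expectation (Q_dist n y x (pipage_rounding sel n x)) fb"
  proof (rule exp_cong_pmf)
    fix A assume "A \<in> set_pmf (Q_dist n y x (pipage_rounding sel n x))"
    then have "A \<inter> {..<n} = A" using supp by blast
    then show "f A = fb A" unfolding fb_def by simp
  qed
  have e3: "measure_pmf.expectation (Q_dist n y x (pipage_rounding sel n x)) fb =
            measure_pmf.expectation (pipage_iter sel n n x) (Phi n fb a)"
    unfolding Q_dist_def pipage_rounding_def bind_map_pmf Phi_def a_def[symmetric]
    by (rule exp_bind_bounded[OF fbb])
  have "card (frac_coords n x) \<le> card {..<n}"
    by (intro card_mono) (auto simp: frac_coords_def)
  note cx = this
  have im: "\<forall>z. (\<forall>k<n. 0 \<le> z k \<and> z k \<le> 1) \<longrightarrow> card (frac_coords n z) \<le> n \<longrightarrow>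
           G n fb a z \<le> measure_pmf.expectation (pipage_iter sel n n z) (Phi n fb a)"
    by (rule iter_mono[OF vs ar fbb sm])
  have "G n fb a x \<le> measure_pmf.expectation (pipage_iter sel n n x) (Phi n fb a)"
    apply (rule im[rule_format])
    using xr cx by auto
  moreover have "G n fb a x = measure_pmf.expectation (Ind n y) fb"
  proof -
    have "Ind n (\<lambda>k. x k * a k) = Ind n y" by (rule Ind_cong) (rule xa)
    then show ?thesis unfolding G_def mlext_def by simp
  qed
  ultimately show ?thesis using e1 e2 e3 by simp
qed

end
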